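(* Let $\tau$ be a uniformly random permutation of $\{1,\dots,n\}$ and let $S_n$ be the number of steps of the greedy walk from $1$ to $n$ in $G_n$ (as in the context). For every $\varepsilon>0$, \[ \mathbb{P}\bigl((2-\varepsilon)\log n\le S_n\le(2+\varepsilon)\log n\bigr)\to1\quad\text{as } n\to\infty, \] where $\log$ is the natural logarithm.
   Context: Vertices $V=\{1,\dots,n\}\subset\mathbb{Z}$. A permutation $\tau$ of $V$ gives insertion times: vertex $x$ is inserted at time $\tau(x)$. The undirected graph $G_n$ on $V$ is built as follows: start with no edges; for $t=1,\dots,n$, let $x$ be the vertex with $\tau(x)=t$; if some $y<x$ with $\tau(y)<t$ exists, add an edge between $x$ and the largest such $y$; if some $y>x$ with $\tau(y)<t$ exists, add an edge between $x$ and the smallest such $y$. The greedy walk toward target $n$ starts at $x_0=1$ and, from the current vertex $x\ne n$, moves to the neighbor $y$ of $x$ minimizing $|y-n|$, stopping at $n$; $S_n$ is its number of moves. *)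

theory Defs
  imports Complex_Main "HOL-Combinatorics.Permutations"
begin

text \<open>Vertices are 1..n (as naturals). tau x is the insertion time of x;
  tau permutes {1..n}.\<close>

definition attach :: "(nat \<Rightarrow> nat) \<Rightarrow> nat \<Rightarrow> nat \<Rightarrow> nat \<Rightarrow> bool" where
  "attach tau n x y \<longleftrightarrow> x \<in> {1..n} \<and>
     ((\<exists>z\<in>{1..n}. z < x \<and> tau z < tau x) \<and>
        y = Max {z\<in>{1..n}. z < x \<and> tau z < tau x}
    \<or> (\<exists>z\<in>{1..n}. x < z \<and> tau z < tau x) \<and>
        y = Min {z\<in>{1..n}. x < z \<and> tau z < tau x})"

definition adj :: "(nat \<Rightarrow> nat) \<Rightarrow> nat \<Rightarrow> nat \<Rightarrow> nat \<Rightarrow> bool" where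
  "adj tau n x y \<longleftrightarrow> attach tau n x y \<or> attach tau n y x"

definition greedy_step :: "(nat \<Rightarrow> nat) \<Rightarrow> nat \<Rightarrow> nat \<Rightarrow> nat" where
  "greedy_step tau n x = (ARG_MIN (\<lambda>y. \<bar>int y - int n\<bar>) y. adj tau n x y)"

definition greedy_walk :: "(nat \<Rightarrow> nat) \<Rightarrow> nat \<Rightarrow> nat \<Rightarrow> nat" where
  "greedy_walk tau n k = ((\<lambda>x. if x = n then x else greedy_step tau n x) ^^ k) 1"

definition greedy_steps :: "(nat \<Rightarrow> nat) \<Rightarrow> nat \<Rightarrow> nat" where
  "greedy_steps tau n = (LEAST k. greedy_walk tau n k = n)"

definition perm_prob :: "nat \<Rightarrow> ((nat \<Rightarrow> nat) \<Rightarrow> bool) \<Rightarrow> real" where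
  "perm_prob n P = real (card {tau. tau permutes {1..n} \<and> P tau})
                   / real (card {tau. tau permutes {1..n}})"

end

theory Submission
  imports Defs "HOL-Analysis.Harmonic_Numbers"
begin

definition lrec :: "(nat \<Rightarrow> nat) \<Rightarrow> nat \<Rightarrow> nat set" where
  "lrec tau n = {k\<in>{1..n}. \<forall>j\<in>{1..n}. j < k \<longrightarrow> tau k < tau j}"
definition rrec :: "(nat \<Rightarrow> nat) \<Rightarrow> nat \<Rightarrow> nat set" where
  "rrec tau n = {k\<in>{1..n}. \<forall>j\<in>{1..n}. k < j \<longrightarrow> tau k < tau j}"

lemma attach_D:
  assumes "attach tau n z x"
  shows "z \<in> {1..n} \<and> x \<in> {1..n} \<and>
    ((x < z \<and> tau x < tau z \<and> (\<forall>w\<in>{1..n}. x < w \<and> w < z \<longrightarrow> \<not> tau w < tau z)) \<or>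
     (z < x \<and> tau x < tau z \<and> (\<forall>w\<in>{1..n}. z < w \<and> w < x \<longrightarrow> \<not> tau w < tau z)))"
proof -
  have z: "z \<in> {1..n}" using assms unfolding attach_def by auto
  show ?thesis
  proof (cases "(\<exists>w\<in>{1..n}. w < z \<and> tau w < tau z) \<and> x = Max {w\<in>{1..n}. w < z \<and> tau w < tau z}")
    case True
    let ?S = "{w\<in>{1..n}. w < z \<and> tau w < tau z}"
    have f: "finite ?S" "?S \<noteq> {}" using True by auto
    have "x \<in> ?S" using Max_in[OF f] True by simp
    moreover have "\<forall>w\<in>?S. w \<le> x" using Max_ge[OF f(1)] True by simp
    ultimately have "x < z \<and> tau x < tau z \<and> (\<forall>w\<in>{1..n}. x < w \<and> w < z \<longrightarrow> \<not> tau w < tau z)"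
    proof (intro conjI ballI impI notI)
      fix w assume "w \<in> {1..n}" "x < w \<and> w < z" "tau w < tau z"
      then have "w \<in> ?S" by simp
      then have "w \<le> x" using \<open>\<forall>w\<in>?S. w \<le> x\<close> by blast
      then show False using \<open>x < w \<and> w < z\<close> by simp
    qed simp_all
    then show ?thesis using z \<open>x \<in> ?S\<close> by blast
  next
    case False
    let ?S = "{w\<in>{1..n}. z < w \<and> tau w < tau z}"
    have T: "(\<exists>w\<in>{1..n}. z < w \<and> tau w < tau z) \<and> x = Min ?S"
      using False assms unfolding attach_def by blast
    have f: "finite ?S" "?S \<noteq> {}" using T by auto
    have "x \<in> ?S" using Min_in[OF f] T by simp
    moreover have "\<forall>w\<in>?S. x \<le> w" using Min_le[OF f(1)] T by simp
    ultimately have "z < x \<and> tau x < tau z \<and> (\<forall>w\<in>{1..n}. z < w \<and> w < x \<longrightarrow> \<not> tau w < tau z)"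
    proof (intro conjI ballI impI notI)
      fix w assume "w \<in> {1..n}" "z < w \<and> w < x" "tau w < tau z"
      then have "w \<in> ?S" by simp
      then have "x \<le> w" using \<open>\<forall>w\<in>?S. x \<le> w\<close> by blast
      then show False using \<open>z < w \<and> w < x\<close> by simp
    qed simp_all
    then show ?thesis using z \<open>x \<in> ?S\<close> by blast
  qed
qed

lemma attach_leftI:
  assumes "z \<in> {1..n}" "x \<in> {1..n}" "x < z" "tau x < tau z"
    "\<forall>w\<in>{1..n}. x < w \<and> w < z \<longrightarrow> \<not> tau w < tau z"
  shows "attach tau n z x"
proof -
  let ?S = "{w\<in>{1..n}. w < z \<and> tau w < tau z}"
  have "Max ?S = x"
  proof (rule Max_eqI)
    fix y assume y: "y \<in> ?S"
    show "y \<le> x"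
    proof (rule ccontr)
      assume "\<not> y \<le> x"
      then have "x < y" by simp
      then have "y \<in> {1..n}" "x < y \<and> y < z" "tau y < tau z" using y by auto
      then show False using assms(5) by blast
    qed
  next
    show "finite ?S" by simp
  next
    show "x \<in> ?S" using assms(1-4) by simp
  qed
  then show ?thesis unfolding attach_def using assms by blast
qed

lemma attach_rightI:
  assumes "z \<in> {1..n}" "x \<in> {1..n}" "z < x" "tau x < tau z"
    "\<forall>w\<in>{1..n}. z < w \<and> w < x \<longrightarrow> \<not> tau w < tau z"
  shows "attach tau n z x"
proof -
  let ?S = "{w\<in>{1..n}. z < w \<and> tau w < tau z}"
  have "Min ?S = x"
  proof (rule Min_eqI)
    fix y assume y: "y \<in> ?S"
    show "x \<le> y"
    proof (rule ccontr)
      assume "\<not> x \<le> y"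
      then have "y < x" by simp
      then have "y \<in> {1..n}" "z < y \<and> y < x" "tau y < tau z" using y by auto
      then show False using assms(5) by blast
    qed
  next
    show "finite ?S" by simp
  next
    show "x \<in> ?S" using assms(1-4) by simp
  qed
  then show ?thesis unfolding attach_def using assms by blast
qed

lemma greedy_step_eq:
  assumes "adj tau n x y" "\<And>z. adj tau n x z \<Longrightarrow> z \<le> y" "y \<le> n"
  shows "greedy_step tau n x = y"
proof -
  let ?f = "\<lambda>y. \<bar>int y - int n\<bar>"
  have "is_arg_min ?f (adj tau n x) y"
    unfolding is_arg_min_def using assms by force
  moreover have "y' = y" if "is_arg_min ?f (adj tau n x) y'" for y'
  proof -
    have "adj tau n x y'" "\<not> ?f y < ?f y'" using that assms(1) unfolding is_arg_min_def by blast+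
    moreover have "y' \<le> y" using assms(2) calculation(1) by blast
    ultimately show ?thesis using assms(3) by linarith
  qed
  ultimately have "(SOME y. is_arg_min ?f (adj tau n x) y) = y" by (rule some_equality)
  then show ?thesis unfolding greedy_step_def arg_min_def by simp
qed

context
  fixes tau :: "nat \<Rightarrow> nat" and n :: nat
  assumes perm: "tau permutes {1..n}"
begin

lemma tau_inj: "x \<in> {1..n} \<Longrightarrow> y \<in> {1..n} \<Longrightarrow> tau x = tau y \<Longrightarrow> x = y"
  using permutes_inj[OF perm] by (auto dest: injD)

definition "MM = lrec tau n \<union> rrec tau n"

lemma MM_sub: "MM \<subseteq> {1..n}"
  unfolding MM_def lrec_def rrec_def by auto

lemma key_step:
  assumes xM: "x \<in> MM" and xn: "x < n"
  shows "\<exists>y\<in>MM. x < y \<and> (\<forall>w\<in>MM. x < w \<longrightarrow> y \<le> w) \<and> greedy_step tau n x = y"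
proof -
  have x1: "x \<in> {1..n}" using xM MM_sub by auto
  show ?thesis
  proof (cases "\<exists>z\<in>{1..n}. x < z \<and> tau z < tau x")
    case True
    let ?S = "{z\<in>{1..n}. x < z \<and> tau z < tau x}"
    define y where "y = Min ?S"
    have f: "finite ?S" "?S \<noteq> {}" using True by auto
    have yS: "y \<in> ?S" using Min_in[OF f] y_def by simp
    have ymin: "\<And>w. w \<in> ?S \<Longrightarrow> y \<le> w" using Min_le[OF f(1)] y_def by simp
    have xl: "x \<in> lrec tau n"
      using xM True unfolding MM_def rrec_def by auto
    have between: "\<And>w. w \<in> {1..n} \<Longrightarrow> x < w \<Longrightarrow> w < y \<Longrightarrow> tau x < tau w"
    proof -
      fix w assume w: "w \<in> {1..n}" "x < w" "w < y"
      have "\<not> tau w < tau x" using ymin[of w] w by auto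
      moreover have "tau w \<noteq> tau x" using tau_inj[OF w(1) x1] w by auto
      ultimately show "tau x < tau w" by simp
    qed
    have yl: "y \<in> lrec tau n"
      unfolding lrec_def
    proof (intro CollectI conjI ballI impI)
      show "y \<in> {1..n}" using yS by simp
      fix j assume j: "j \<in> {1..n}" "j < y"
      consider "j < x" | "j = x" | "x < j" by linarith
      then show "tau y < tau j"
      proof cases
        case 1 then show ?thesis using xl j yS unfolding lrec_def by force
      next
        case 2 then show ?thesis using yS by simp
      next
        case 3 then show ?thesis using between[OF j(1) 3 j(2)] yS by simp
      qed
    qed
    have ynext: "\<forall>w\<in>MM. x < w \<longrightarrow> y \<le> w"
    proof (intro ballI impI)
      fix w assume w: "w \<in> MM" "x < w"
      show "y \<le> w"
      proof (rule ccontr)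
        assume "\<not> y \<le> w"
        then have wy: "w < y" by simp
        have w1: "w \<in> {1..n}" using w MM_sub by auto
        have b: "tau x < tau w" using between[OF w1 w(2) wy] .
        show False
        proof (cases "w \<in> lrec tau n")
          case True then show False using x1 w(2) b unfolding lrec_def by force
        next
          case False
          then have "w \<in> rrec tau n" using w unfolding MM_def by auto
          then have "tau w < tau y" using wy yS unfolding rrec_def by force
          then show False using b yS by simp
        qed
      qed
    qed
    have adjy: "adj tau n x y"
      unfolding adj_def
    proof (rule disjI1, rule attach_rightI)
      show "\<forall>w\<in>{1..n}. x < w \<and> w < y \<longrightarrow> \<not> tau w < tau x"
      proof (intro ballI impI)
        fix w assume "w \<in> {1..n}" "x < w \<and> w < y"
        then have "tau x < tau w" using between by blast
        then show "\<not> tau w < tau x" by simp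
      qed
    qed (use x1 yS in auto)
    have maxn: "z \<le> y" if az: "adj tau n x z" for z
    proof -
      consider "attach tau n x z" | "attach tau n z x" using az unfolding adj_def by blast
      then show ?thesis
      proof cases
        case 1
        note d = attach_D[OF 1]
        show ?thesis
        proof (cases "z < x")
          case True then show ?thesis using yS by simp
        next
          case False
          then have zx: "x < z" "tau z < tau x" "\<forall>w\<in>{1..n}. x < w \<and> w < z \<longrightarrow> \<not> tau w < tau x"
            using d by auto
          have "z \<in> ?S" using d zx by auto
          then have "y \<le> z" by (rule ymin)
          show ?thesis
          proof (rule ccontr)
            assume "\<not> z \<le> y"
            then show False using zx(3) yS by force
          qed
        qed
      next
        case 2
        note d = attach_D[OF 2]
        show ?thesis
        proof (rule ccontr)
          assume zy: "\<not> z \<le> y"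
          then have "x < z" using yS by simp
          then have "tau x < tau z" "\<forall>w\<in>{1..n}. x < w \<and> w < z \<longrightarrow> \<not> tau w < tau z"
            using d by auto
          then show False using yS zy by force
        qed
      qed
    qed
    have "greedy_step tau n x = y"
      by (rule greedy_step_eq[OF adjy maxn]) (use yS in auto)
    then show ?thesis using ynext yl yS unfolding MM_def by auto
  next
    case False
    let ?T = "{x<..n}"
    have Tne: "?T \<noteq> {}" using xn by auto
    obtain m where mT: "m \<in> ?T" and mmin: "\<And>w. w \<in> ?T \<Longrightarrow> tau m \<le> tau w"
    proof -
      have "Min (tau ` ?T) \<in> tau ` ?T" using Tne by (intro Min_in) auto
      then obtain m where "m \<in> ?T" "tau m = Min (tau ` ?T)" by auto
      then show ?thesis using that[of m] by simp
    qed
    have m1: "m \<in> {1..n}" using mT x1 by auto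
    have mlt: "\<And>w. w \<in> ?T \<Longrightarrow> w \<noteq> m \<Longrightarrow> tau m < tau w"
    proof -
      fix w assume w: "w \<in> ?T" "w \<noteq> m"
      have "tau w \<noteq> tau m" using tau_inj[of w m] w m1 x1 by auto
      then show "tau m < tau w" using mmin[OF w(1)] by simp
    qed
    have xm: "tau x < tau m"
    proof -
      have "\<not> tau m < tau x" using False m1 mT by auto
      moreover have "tau m \<noteq> tau x" using tau_inj[OF m1 x1] mT by auto
      ultimately show ?thesis by simp
    qed
    have mr: "m \<in> rrec tau n"
      unfolding rrec_def using m1 mlt mT by auto
    have mnext: "\<forall>w\<in>MM. x < w \<longrightarrow> m \<le> w"
    proof (intro ballI impI)
      fix w assume w: "w \<in> MM" "x < w"
      show "m \<le> w"
      proof (rule ccontr)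
        assume "\<not> m \<le> w"
        then have wm: "w < m" by simp
        have w1: "w \<in> {1..n}" using w MM_sub by auto
        show False
        proof (cases "w \<in> lrec tau n")
          case True
          then have "tau w < tau x" using x1 w(2) unfolding lrec_def by auto
          then show False using False w1 w(2) by auto
        next
          case False
          then have "w \<in> rrec tau n" using w unfolding MM_def by auto
          then have "tau w < tau m" using wm m1 unfolding rrec_def by auto
          moreover have "tau m \<le> tau w" using mmin w w1 by auto
          ultimately show False by simp
        qed
      qed
    qed
    have adjm: "adj tau n x m"
      unfolding adj_def
    proof (rule disjI2, rule attach_leftI)
      show "\<forall>w\<in>{1..n}. x < w \<and> w < m \<longrightarrow> \<not> tau w < tau m"
        using mmin by (auto simp: not_less)
    qed (use m1 x1 mT xm in auto)
    have maxn: "z \<le> m" if az: "adj tau n x z" for z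
    proof -
      consider "attach tau n x z" | "attach tau n z x" using az unfolding adj_def by blast
      then show ?thesis
      proof cases
        case 1
        note d = attach_D[OF 1]
        show ?thesis
        proof (cases "z < x")
          case True then show ?thesis using mT by simp
        next
          case c: False
          then show ?thesis using d False by auto
        qed
      next
        case 2
        note d = attach_D[OF 2]
        show ?thesis
        proof (rule ccontr)
          assume zm: "\<not> z \<le> m"
          then have "x < z" using mT by simp
          then have "\<forall>w\<in>{1..n}. x < w \<and> w < z \<longrightarrow> \<not> tau w < tau z"
            using d by auto
          then have "\<not> tau m < tau z" using m1 mT zm by auto
          moreover have "tau m < tau z" using mlt[of z] d zm mT by auto
          ultimately show False by simp
        qed
      qed
    qed
    have "greedy_step tau n x = m"
      by (rule greedy_step_eq[OF adjm maxn]) (use mT in auto)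
    then show ?thesis using mnext mr mT unfolding MM_def by auto
  qed
qed

lemma one_M: "1 \<le> n \<Longrightarrow> 1 \<in> MM"
  unfolding MM_def lrec_def by auto

lemma n_M: "1 \<le> n \<Longrightarrow> n \<in> MM"
  unfolding MM_def rrec_def by auto

lemma finM: "finite MM" using MM_sub finite_subset by blast

lemma walk_Suc: "greedy_walk tau n (Suc k) =
   (if greedy_walk tau n k = n then n else greedy_step tau n (greedy_walk tau n k))"
  unfolding greedy_walk_def by simp

lemma walk_inv:
  assumes n1: "1 \<le> n" and k: "k \<le> card MM - 1"
  shows "greedy_walk tau n k \<in> MM \<and> card {w\<in>MM. w < greedy_walk tau n k} = k"
  using k
proof (induction k)
  case 0
  have "{w\<in>MM. w < 1} = {}" using MM_sub by auto
  then show ?case using one_M[OF n1] unfolding greedy_walk_def by simp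
next
  case (Suc k)
  let ?x = "greedy_walk tau n k"
  have IH: "?x \<in> MM" "card {w\<in>MM. w < ?x} = k" using Suc by auto
  have "{w\<in>MM. w < n} = MM - {n}" using MM_sub by auto
  then have cn: "card {w\<in>MM. w < n} = card MM - 1" using n_M[OF n1] finM by simp
  have xn: "?x \<noteq> n" using IH(2) cn Suc(2) by auto
  have "?x \<le> n" using IH(1) MM_sub by auto
  then have xlt: "?x < n" using xn by simp
  obtain y where y: "y \<in> MM" "?x < y" "\<forall>w\<in>MM. ?x < w \<longrightarrow> y \<le> w" "greedy_step tau n ?x = y"
    using key_step[OF IH(1) xlt] by blast
  have eq: "greedy_walk tau n (Suc k) = y" using walk_Suc xn y(4) by simp
  have "{w\<in>MM. w < y} = insert ?x {w\<in>MM. w < ?x}"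
  proof (rule set_eqI)
    fix w
    show "w \<in> {w\<in>MM. w < y} \<longleftrightarrow> w \<in> insert ?x {w\<in>MM. w < ?x}"
    proof
      assume w: "w \<in> {w\<in>MM. w < y}"
      have "\<not> ?x < w"
      proof
        assume "?x < w"
        then have "y \<le> w" using y(3) w by blast
        then show False using w by simp
      qed
      then show "w \<in> insert ?x {w\<in>MM. w < ?x}" using w by auto
    next
      assume "w \<in> insert ?x {w\<in>MM. w < ?x}"
      then show "w \<in> {w\<in>MM. w < y}" using IH(1) y(2) by auto
    qed
  qed
  then have "card {w\<in>MM. w < y} = Suc k" using IH finM by simp
  then show ?case using eq y(1) by simp
qed

lemma MM_ne: "1 \<le> n \<Longrightarrow> card MM \<ge> 1"
proof -
  assume n1: "1 \<le> n"
  have "MM \<noteq> {}" using n_M[OF n1] by auto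
  then show "card MM \<ge> 1" using finM by (simp add: Suc_le_eq card_gt_0_iff)
qed

lemma steps_card:
  assumes n1: "1 \<le> n"
  shows "greedy_steps tau n = card MM - 1"
proof -
  let ?k = "card MM - 1"
  have last: "greedy_walk tau n ?k = n"
  proof (rule ccontr)
    assume ne: "greedy_walk tau n ?k \<noteq> n"
    let ?x = "greedy_walk tau n ?k"
    have w: "?x \<in> MM" "card {w\<in>MM. w < ?x} = ?k" using walk_inv[OF n1] by auto
    have "{?x, n} \<subseteq> MM" using w(1) n_M[OF n1] by auto
    then have c2: "card {?x, n} \<le> card MM" using finM by (intro card_mono) auto
    have "card {?x, n} = 2" using ne by simp
    then have c2': "2 \<le> card MM" using c2 by simp
    have "{w\<in>MM. w < ?x} \<subseteq> MM - {?x, n}" using w MM_sub by auto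
    then have "card {w\<in>MM. w < ?x} \<le> card (MM - {?x, n})" using finM by (intro card_mono) auto
    also have "\<dots> = card MM - 2" using \<open>{?x, n} \<subseteq> MM\<close> \<open>card {?x, n} = 2\<close> finM
      by (simp add: card_Diff_subset)
    finally show False using w(2) c2' by simp
  qed
  have early: "greedy_walk tau n k \<noteq> n" if "k < ?k" for k
  proof
    assume e: "greedy_walk tau n k = n"
    have "card {w\<in>MM. w < greedy_walk tau n k} = k" using walk_inv[OF n1, of k] that by auto
    moreover have "{w\<in>MM. w < n} = MM - {n}" using MM_sub by auto
    ultimately have "card (MM - {n}) = k" using e by simp
    then show False using that n_M[OF n1] finM by simp
  qed
  show ?thesis
    unfolding greedy_steps_def
  proof (rule Least_equality)
    show "greedy_walk tau n ?k = n" by (rule last)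
  next
    fix y assume y: "greedy_walk tau n y = n"
    show "?k \<le> y"
    proof (rule ccontr)
      assume "\<not> ?k \<le> y"
      then have "y < ?k" by simp
      then show False using early y by blast
    qed
  qed
qed

lemma card_MM:
  assumes n1: "1 \<le> n"
  shows "card MM + 1 = card (lrec tau n) + card (rrec tau n)"
proof -
  obtain p where p: "p \<in> {1..n}" "\<And>j. j \<in> {1..n} \<Longrightarrow> tau p \<le> tau j"
  proof -
    have "Min (tau ` {1..n}) \<in> tau ` {1..n}" using n1 by (intro Min_in) auto
    then obtain p where "p \<in> {1..n}" "tau p = Min (tau ` {1..n})" by auto
    then show ?thesis using that[of p] by simp
  qed
  have pl: "tau p < tau j" if "j \<in> {1..n}" "j \<noteq> p" for j
  proof -
    have "tau p \<noteq> tau j" using tau_inj[OF that(1) p(1)] that(2) by metis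
    then show ?thesis using p(2)[OF that(1)] by simp
  qed
  have "lrec tau n \<inter> rrec tau n = {p}"
  proof
    have "p \<in> lrec tau n" unfolding lrec_def using p(1) pl by auto
    moreover have "p \<in> rrec tau n" unfolding rrec_def using p(1) pl by auto
    ultimately show "{p} \<subseteq> lrec tau n \<inter> rrec tau n" by simp
  next
    show "lrec tau n \<inter> rrec tau n \<subseteq> {p}"
    proof
      fix k assume k: "k \<in> lrec tau n \<inter> rrec tau n"
      have k1: "k \<in> {1..n}" using k unfolding lrec_def by auto
      show "k \<in> {p}"
      proof (rule ccontr)
        assume "k \<notin> {p}"
        then consider "k < p" | "p < k" by force
        then show False
        proof cases
          case 1 then have "tau k < tau p" using k p(1) unfolding rrec_def by auto
          then show False using p(2)[OF k1] by simp
        next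
          case 2 then have "tau k < tau p" using k p(1) unfolding lrec_def by auto
          then show False using p(2)[OF k1] by simp
        qed
      qed
    qed
  qed
  moreover have "finite (lrec tau n)" "finite (rrec tau n)" unfolding lrec_def rrec_def by auto
  ultimately have "card MM + card {p} = card (lrec tau n) + card (rrec tau n)"
    unfolding MM_def using card_Un_Int[of "lrec tau n" "rrec tau n"] by simp
  then show ?thesis by simp
qed

lemma steps_eq:
  assumes n1: "1 \<le> n"
  shows "real (greedy_steps tau n) = real (card (lrec tau n)) + real (card (rrec tau n)) - 2"
proof -
  have "card MM \<ge> 1" by (rule MM_ne[OF n1])
  then show ?thesis using steps_card[OF n1] card_MM[OF n1] by (simp add: of_nat_diff)
qed

end

definition ext :: "nat \<Rightarrow> (nat \<Rightarrow> nat) \<Rightarrow> nat \<Rightarrow> nat \<Rightarrow> nat" where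
  "ext n p b k = (if k \<in> {1..n} then (if b \<le> p k then p k + 1 else p k)
                  else if k = Suc n then b else k)"

lemma ext_permutes:
  assumes p: "p permutes {1..n}" and b: "b \<in> {1..Suc n}"
  shows "ext n p b permutes {1..Suc n}"
proof (rule bij_imp_permutes)
  let ?t = "ext n p b"
  have img: "?t ` {1..Suc n} \<subseteq> {1..Suc n}"
  proof
    fix y assume "y \<in> ?t ` {1..Suc n}"
    then obtain k where k: "k \<in> {1..Suc n}" "y = ?t k" by auto
    show "y \<in> {1..Suc n}"
    proof (cases "k \<in> {1..n}")
      case True
      then have "p k \<in> {1..n}" using permutes_in_image[OF p] by simp
      then show ?thesis using k True unfolding ext_def by auto
    next
      case False then have "k = Suc n" using k by auto
      then show ?thesis using k b unfolding ext_def by auto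
    qed
  qed
  have inj: "inj_on ?t {1..Suc n}"
  proof (rule inj_onI)
    fix k l assume k: "k \<in> {1..Suc n}" and l: "l \<in> {1..Suc n}" and e: "?t k = ?t l"
    have pinj: "p k = p l \<Longrightarrow> k = l" using permutes_inj[OF p] by (auto dest: injD)
    show "k = l"
    proof (cases "k \<in> {1..n}")
      case kT: True
      show ?thesis
      proof (cases "l \<in> {1..n}")
        case True
        then show ?thesis using kT e pinj unfolding ext_def by (auto split: if_splits)
      next
        case False then have "l = Suc n" using l by auto
        then show ?thesis using kT e unfolding ext_def by (auto split: if_splits)
      qed
    next
      case kF: False then have kn: "k = Suc n" using k by auto
      show ?thesis
      proof (cases "l \<in> {1..n}")
        case True
        then show ?thesis using kn e unfolding ext_def by (auto split: if_splits)
      next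
        case False then show ?thesis using l kn by auto
      qed
    qed
  qed
  show "bij_betw ?t {1..Suc n} {1..Suc n}"
    using endo_inj_surj[OF _ img inj] inj by (simp add: bij_betw_def)
next
  fix x assume "x \<notin> {1..Suc n}"
  then show "ext n p b x = x" unfolding ext_def by auto
qed

lemma ext_inj:
  "inj_on (\<lambda>(p, b). ext n p b) ({p. p permutes {1..n}} \<times> {1..Suc n})"
proof (rule inj_onI, clarify)
  fix p b q c
  assume p: "p permutes {1..n}" and q: "q permutes {1..n}" and e: "ext n p b = ext n q c"
  have bc: "b = c" using fun_cong[OF e, of "Suc n"] unfolding ext_def by simp
  have "p k = q k" for k
  proof (cases "k \<in> {1..n}")
    case True
    then show ?thesis using fun_cong[OF e, of k] bc unfolding ext_def by (auto split: if_splits)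
  next
    case False then show ?thesis using permutes_not_in[OF p] permutes_not_in[OF q] by simp
  qed
  then show "p = q \<and> b = c" using bc by auto
qed

lemma ext_image:
  "(\<lambda>(p, b). ext n p b) ` ({p. p permutes {1..n}} \<times> {1..Suc n}) = {t. t permutes {1..Suc n}}"
proof (rule card_subset_eq)
  show "finite {t. t permutes {1..Suc n}}" by (intro finite_permutations) auto
  show "(\<lambda>(p, b). ext n p b) ` ({p. p permutes {1..n}} \<times> {1..Suc n}) \<subseteq> {t. t permutes {1..Suc n}}"
    using ext_permutes by auto
  have "card ((\<lambda>(p, b). ext n p b) ` ({p. p permutes {1..n}} \<times> {1..Suc n}))
      = card ({p. p permutes {1..n}} \<times> {1..Suc n})"
    by (rule card_image[OF ext_inj])
  also have "\<dots> = fact n * Suc n" by (simp add: card_cartesian_product card_permutations)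
  also have "\<dots> = card {t. t permutes {1..Suc n}}" by (simp add: card_permutations)
  finally show "card ((\<lambda>(p, b). ext n p b) ` ({p. p permutes {1..n}} \<times> {1..Suc n})) =
      card {t. t permutes {1..Suc n}}" .
qed

lemma ext_in: "k \<in> {1..n} \<Longrightarrow> ext n p b k = (if b \<le> p k then p k + 1 else p k)"
  unfolding ext_def by simp

lemma ext_top: "ext n p b (Suc n) = b"
  unfolding ext_def by simp

lemma ext_lrec:
  assumes p: "p permutes {1..n}" and b: "b \<in> {1..Suc n}"
  shows "card (lrec (ext n p b) (Suc n)) = card (lrec p n) + (if b = 1 then 1 else 0)"
proof -
  let ?t = "ext n p b"
  have ord: "?t k < ?t j \<longleftrightarrow> p k < p j" if "k \<in> {1..n}" "j \<in> {1..n}" for k j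
  proof -
    have e: "?t k = (if b \<le> p k then p k + 1 else p k)" "?t j = (if b \<le> p j then p j + 1 else p j)"
      using ext_in that by auto
    show ?thesis unfolding e by (cases "b \<le> p k"; cases "b \<le> p j") simp_all
  qed
  have low: "k \<in> lrec ?t (Suc n) \<longleftrightarrow> k \<in> lrec p n" if k: "k \<in> {1..n}" for k
  proof
    assume a: "k \<in> lrec ?t (Suc n)"
    show "k \<in> lrec p n" unfolding lrec_def
    proof (intro CollectI conjI ballI impI)
      show "k \<in> {1..n}" by (rule k)
      fix j assume j: "j \<in> {1..n}" "j < k"
      have "?t k < ?t j" using a j unfolding lrec_def by auto
      then show "p k < p j" using ord[OF k j(1)] by simp
    qed
  next
    assume a: "k \<in> lrec p n"
    show "k \<in> lrec ?t (Suc n)" unfolding lrec_def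
    proof (intro CollectI conjI ballI impI)
      show "k \<in> {1..Suc n}" using k by simp
      fix j assume j: "j \<in> {1..Suc n}" "j < k"
      then have j1: "j \<in> {1..n}" using k by simp
      have "p k < p j" using a j1 j(2) unfolding lrec_def by auto
      then show "?t k < ?t j" using ord[OF k j1] by simp
    qed
  qed
  have top: "Suc n \<in> lrec ?t (Suc n) \<longleftrightarrow> b = 1"
  proof
    assume a: "Suc n \<in> lrec ?t (Suc n)"
    show "b = 1"
    proof (rule ccontr)
      assume b1: "b \<noteq> 1"
      then have "b - 1 \<in> {1..n}" using b by auto
      then obtain j where j: "j \<in> {1..n}" "p j = b - 1"
        using permutes_image[OF p] by (metis imageE)
      have "\<not> b \<le> p j" using j b1 b by auto
      then have "?t j = b - 1" using j ext_in[OF j(1)] by simp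
      moreover have "?t (Suc n) = b" by (rule ext_top)
      ultimately have "\<not> ?t (Suc n) < ?t j" by simp
      moreover have "j \<in> {1..Suc n}" "j < Suc n" using j by auto
      ultimately show False using a unfolding lrec_def by blast
    qed
  next
    assume b1: "b = 1"
    show "Suc n \<in> lrec ?t (Suc n)" unfolding lrec_def
    proof (intro CollectI conjI ballI impI)
      show "Suc n \<in> {1..Suc n}" by simp
      fix j assume j: "j \<in> {1..Suc n}" "j < Suc n"
      then have j1: "j \<in> {1..n}" by simp
      have "p j \<in> {1..n}" using permutes_in_image[OF p] j1 by simp
      then show "?t (Suc n) < ?t j" using ext_in[OF j1] ext_top b1 by simp
    qed
  qed
  have sub: "lrec ?t (Suc n) \<subseteq> {1..Suc n}" "lrec p n \<subseteq> {1..n}" unfolding lrec_def by auto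
  have split: "lrec ?t (Suc n) = lrec p n \<union> (if b = 1 then {Suc n} else {})"
  proof (rule set_eqI)
    fix k
    show "k \<in> lrec ?t (Suc n) \<longleftrightarrow> k \<in> lrec p n \<union> (if b = 1 then {Suc n} else {})"
    proof (cases "k \<in> {1..n}")
      case True
      then show ?thesis using low[OF True] by simp
    next
      case False
      then have "k \<notin> lrec p n" using sub by auto
      moreover have "k \<in> lrec ?t (Suc n) \<longleftrightarrow> k = Suc n \<and> b = 1"
      proof
        assume k: "k \<in> lrec ?t (Suc n)"
        then have "k \<in> {1..Suc n}" using sub(1) by blast
        then have "k = Suc n" using False by auto
        then show "k = Suc n \<and> b = 1" using top k by simp
      next
        assume "k = Suc n \<and> b = 1"
        then show "k \<in> lrec ?t (Suc n)" using top by simp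
      qed
      ultimately show ?thesis by auto
    qed
  qed
  have "Suc n \<notin> lrec p n" using sub by auto
  moreover have "finite (lrec p n)" using sub finite_subset by blast
  ultimately show ?thesis unfolding split by auto
qed

lemma gen_lrec:
  fixes x :: real
  shows "(\<Sum>t\<in>{t. t permutes {1..n}}. x ^ card (lrec t n)) = pochhammer x n"
proof (induction n)
  case 0
  have "{t. t permutes {1..(0::nat)}} = {id}" by auto
  then show ?case unfolding lrec_def by simp
next
  case (Suc n)
  let ?P = "{p. p permutes {1..n}}"
  have "(\<Sum>t\<in>{t. t permutes {1..Suc n}}. x ^ card (lrec t (Suc n)))
      = (\<Sum>pb\<in>?P \<times> {1..Suc n}. x ^ card (lrec ((\<lambda>(p, b). ext n p b) pb) (Suc n)))"
    by (subst ext_image[symmetric], subst sum.reindex[OF ext_inj]) (simp add: comp_def)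
  also have "\<dots> = (\<Sum>p\<in>?P. \<Sum>b\<in>{1..Suc n}. x ^ card (lrec (ext n p b) (Suc n)))"
    unfolding sum.cartesian_product by (intro sum.cong refl) auto
  also have "\<dots> = (\<Sum>p\<in>?P. \<Sum>b\<in>{1..Suc n}. x ^ card (lrec p n) * (if b = 1 then x else 1))"
    by (intro sum.cong refl) (auto simp: ext_lrec)
  also have "\<dots> = (\<Sum>p\<in>?P. x ^ card (lrec p n) * (x + of_nat n))"
  proof (rule sum.cong[OF refl])
    fix p
    have "{1..Suc n} = insert 1 {2..Suc n}" by auto
    then have "(\<Sum>b\<in>{1..Suc n}. (if b = 1 then x else 1)) = x + of_nat n" by simp
    then show "(\<Sum>b\<in>{1..Suc n}. x ^ card (lrec p n) * (if b = 1 then x else 1)) = x ^ card (lrec p n) * (x + of_nat n)"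
      by (simp add: sum_distrib_left[symmetric])
  qed
  also have "\<dots> = pochhammer x n * (x + of_nat n)" using Suc by (simp add: sum_distrib_right[symmetric])
  also have "\<dots> = pochhammer x (Suc n)" by (simp add: pochhammer_Suc)
  finally show ?case .
qed

definition rv :: "nat \<Rightarrow> nat \<Rightarrow> nat" where
  "rv n k = (if k \<in> {1..n} then Suc n - k else k)"

lemma rv_in: "k \<in> {1..n} \<Longrightarrow> rv n k \<in> {1..n}"
  unfolding rv_def by auto

lemma rv_rv: "rv n (rv n k) = k"
  unfolding rv_def by auto

lemma rv_permutes: "rv n permutes {1..n}"
proof (rule bij_imp_permutes)
  show "bij_betw (rv n) {1..n} {1..n}"
    by (rule bij_betw_byWitness[where f' = "rv n"]) (auto simp: rv_rv rv_def)
next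
  fix x assume "x \<notin> {1..n}" then show "rv n x = x" unfolding rv_def by auto
qed

lemma lrec_rv: "x \<in> lrec (t \<circ> rv n) n \<longleftrightarrow> rv n x \<in> rrec t n"
proof (cases "x \<in> {1..n}")
  case False
  then have "rv n x = x" unfolding rv_def by auto
  then show ?thesis using False unfolding lrec_def rrec_def by auto
next
  case True
  have rx: "rv n x = Suc n - x" using True unfolding rv_def by simp
  show ?thesis
  proof
    assume a: "x \<in> lrec (t \<circ> rv n) n"
    show "rv n x \<in> rrec t n" unfolding rrec_def
    proof (intro CollectI conjI ballI impI)
      show "rv n x \<in> {1..n}" using rv_in[OF True] .
      fix j assume j: "j \<in> {1..n}" "rv n x < j"
      have "rv n j \<in> {1..n}" using rv_in[OF j(1)] .
      moreover have "rv n j < x" using j True rx unfolding rv_def by auto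
      ultimately have "t (rv n x) < t (rv n (rv n j))" using a unfolding lrec_def by auto
      then show "t (rv n x) < t j" by (simp add: rv_rv)
    qed
  next
    assume a: "rv n x \<in> rrec t n"
    show "x \<in> lrec (t \<circ> rv n) n" unfolding lrec_def
    proof (intro CollectI conjI ballI impI)
      show "x \<in> {1..n}" by (rule True)
      fix j assume j: "j \<in> {1..n}" "j < x"
      have "rv n j \<in> {1..n}" using rv_in[OF j(1)] .
      moreover have "rv n x < rv n j" using j True rx unfolding rv_def by auto
      ultimately have "t (rv n x) < t (rv n j)" using a unfolding rrec_def by auto
      then show "(t \<circ> rv n) x < (t \<circ> rv n) j" by simp
    qed
  qed
qed

lemma card_rrec: "card (rrec t n) = card (lrec (t \<circ> rv n) n)"
proof -
  have "lrec (t \<circ> rv n) n = rv n ` rrec t n"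
  proof (rule set_eqI)
    fix x
    show "x \<in> lrec (t \<circ> rv n) n \<longleftrightarrow> x \<in> rv n ` rrec t n"
      unfolding lrec_rv by (metis image_iff rv_rv)
  qed
  moreover have "inj (rv n)" by (metis injI rv_rv)
  ultimately show ?thesis by (simp add: card_image inj_on_subset)
qed

lemma gen_rrec:
  fixes x :: real
  shows "(\<Sum>t\<in>{t. t permutes {1..n}}. x ^ card (rrec t n)) = pochhammer x n"
proof -
  have bij: "bij_betw (\<lambda>t. t \<circ> rv n) {t. t permutes {1..n}} {t. t permutes {1..n}}"
    by (rule bij_betw_byWitness[where f' = "\<lambda>t. t \<circ> rv n"])
       (use permutes_compose[OF rv_permutes] in \<open>auto simp: fun_eq_iff rv_rv\<close>)
  have "(\<Sum>t\<in>{t. t permutes {1..n}}. x ^ card (rrec t n))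
      = (\<Sum>t\<in>{t. t permutes {1..n}}. x ^ card (lrec (t \<circ> rv n) n))"
    by (simp add: card_rrec)
  also have "\<dots> = (\<Sum>t\<in>{t. t permutes {1..n}}. x ^ card (lrec t n))"
    by (rule sum.reindex_bij_betw[OF bij, where g = "\<lambda>t. x ^ card (lrec t n)"])
  also have "\<dots> = pochhammer x n" by (rule gen_lrec)
  finally show ?thesis .
qed

lemma poch_bound:
  fixes x :: real
  assumes x: "x > 0"
  shows "pochhammer x n / fact n \<le> exp ((x - 1) * harm n)"
proof (induction n)
  case 0 then show ?case by (simp add: harm_def)
next
  case (Suc n)
  have f: "(x + real n) / real (Suc n) = 1 + (x - 1) / real (Suc n)"
    by (simp add: field_simps)
  have "pochhammer x (Suc n) / fact (Suc n) = (pochhammer x n / fact n) * ((x + real n) / real (Suc n))"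
    by (simp add: pochhammer_Suc field_simps)
  also have "\<dots> \<le> exp ((x - 1) * harm n) * exp ((x - 1) / real (Suc n))"
  proof (rule mult_mono)
    show "(x + real n) / real (Suc n) \<le> exp ((x - 1) / real (Suc n))"
      unfolding f by (rule exp_ge_add_one_self)
  qed (use Suc x in auto)
  also have "\<dots> = exp ((x - 1) * harm (Suc n))"
    by (simp add: harm_Suc exp_add[symmetric] field_simps)
  finally show ?case .
qed

lemma tail_up:
  fixes f :: "(nat \<Rightarrow> nat) \<Rightarrow> nat" and x a :: real
  assumes gen: "(\<Sum>t\<in>{t. t permutes {1..n}}. x ^ f t) = pochhammer x n" and x: "x \<ge> 1"
  shows "real (card {t. t permutes {1..n} \<and> a \<le> real (f t)}) / fact n \<le> exp ((x - 1) * harm n) / x powr a"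
proof -
  let ?P = "{t. t permutes {1..n}}"
  let ?B = "{t. t permutes {1..n} \<and> a \<le> real (f t)}"
  have fin: "finite ?P" by (intro finite_permutations) auto
  have "real (card ?B) * x powr a = (\<Sum>t\<in>?B. x powr a)" by simp
  also have "\<dots> \<le> (\<Sum>t\<in>?B. x ^ f t)"
  proof (rule sum_mono)
    fix t assume "t \<in> ?B"
    then have "x powr a \<le> x powr real (f t)" using x by (intro powr_mono) auto
    then show "x powr a \<le> x ^ f t" using x by (simp add: powr_realpow)
  qed
  also have "\<dots> \<le> (\<Sum>t\<in>?P. x ^ f t)"
    by (rule sum_mono2[OF fin]) (use x in auto)
  also have "\<dots> = pochhammer x n" by (rule gen)
  finally have c: "real (card ?B) * x powr a \<le> pochhammer x n" .
  have xa: "x powr a > 0" using x by simp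
  have "real (card ?B) / fact n = (real (card ?B) * x powr a) / fact n / x powr a"
    using xa by simp
  also have "\<dots> \<le> pochhammer x n / fact n / x powr a"
    using c xa by (intro divide_right_mono) auto
  also have "\<dots> \<le> exp ((x - 1) * harm n) / x powr a"
    using poch_bound[of x n] x xa by (intro divide_right_mono) auto
  finally show ?thesis .
qed

lemma tail_low:
  fixes f :: "(nat \<Rightarrow> nat) \<Rightarrow> nat" and x a :: real
  assumes gen: "(\<Sum>t\<in>{t. t permutes {1..n}}. x ^ f t) = pochhammer x n" and x: "0 < x" "x \<le> 1"
  shows "real (card {t. t permutes {1..n} \<and> real (f t) \<le> a}) / fact n \<le> exp ((x - 1) * harm n) / x powr a"
proof -
  let ?P = "{t. t permutes {1..n}}"
  let ?B = "{t. t permutes {1..n} \<and> real (f t) \<le> a}"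
  have fin: "finite ?P" by (intro finite_permutations) auto
  have "real (card ?B) * x powr a = (\<Sum>t\<in>?B. x powr a)" by simp
  also have "\<dots> \<le> (\<Sum>t\<in>?B. x ^ f t)"
  proof (rule sum_mono)
    fix t assume "t \<in> ?B"
    then have "x powr a \<le> x powr real (f t)" using x by (intro powr_mono') auto
    then show "x powr a \<le> x ^ f t" using x by (simp add: powr_realpow)
  qed
  also have "\<dots> \<le> (\<Sum>t\<in>?P. x ^ f t)"
    by (rule sum_mono2[OF fin]) (use x in auto)
  also have "\<dots> = pochhammer x n" by (rule gen)
  finally have c: "real (card ?B) * x powr a \<le> pochhammer x n" .
  have xa: "x powr a > 0" using x by simp
  have "real (card ?B) / fact n = (real (card ?B) * x powr a) / fact n / x powr a"
    using xa by simp
  also have "\<dots> \<le> pochhammer x n / fact n / x powr a"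
    using c xa by (intro divide_right_mono) auto
  also have "\<dots> \<le> exp ((x - 1) * harm n) / x powr a"
    using poch_bound[of x n] x xa by (intro divide_right_mono) auto
  finally show ?thesis .
qed

lemma harm_le_ln: "n \<ge> 1 \<Longrightarrow> harm n \<le> ln (real n) + (1::real)"
proof -
  assume n: "n \<ge> 1"
  have "harm n - ln (of_nat n) \<le> harm 1 - ln (of_nat 1 :: real)"
    by (rule euler_mascheroni_sequence_decreasing) (use n in auto)
  moreover have "harm 1 = (1::real)" by (simp add: harm_def)
  ultimately show ?thesis by simp
qed

lemma ln_le_harm': "n \<ge> 1 \<Longrightarrow> ln (real n) \<le> (harm n :: real)"
proof -
  assume "n \<ge> 1"
  then have "ln (real n) \<le> ln (real n + 1)" by simp
  also have "\<dots> \<le> harm n" by (rule ln_le_harm)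
  finally show ?thesis .
qed

lemma decay0:
  fixes c K :: real
  assumes c: "c > 0"
  shows "(\<lambda>n. K * exp (- c * ln (real n))) \<longlonglongrightarrow> 0"
proof -
  have "(\<lambda>n. real n powr (- c)) \<longlonglongrightarrow> 0"
    by (rule tendsto_neg_powr) (use c filterlim_real_sequentially in auto)
  then have "(\<lambda>n. K * real n powr (- c)) \<longlonglongrightarrow> 0"
    by (rule tendsto_mult_right_zero)
  moreover have "eventually (\<lambda>n. K * real n powr (- c) = K * exp (- c * ln (real n))) sequentially"
    using eventually_gt_at_top[of "0::nat"] by eventually_elim (simp add: powr_def)
  then have "((\<lambda>n. K * real n powr (- c)) \<longlonglongrightarrow> 0) = ((\<lambda>n. K * exp (- c * ln (real n))) \<longlonglongrightarrow> 0)"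
    by (rule tendsto_cong)
  ultimately show ?thesis by simp
qed

lemma decay:
  fixes g :: "nat \<Rightarrow> real" and c K :: real
  assumes c: "c > 0" and b: "\<And>n. n \<ge> 1 \<Longrightarrow> g n \<le> K * exp (- c * ln (real n))"
    and nn: "\<And>n. 0 \<le> g n"
  shows "g \<longlonglongrightarrow> 0"
proof (rule tendsto_sandwich[OF _ _ tendsto_const decay0[OF c, of K]])
  show "eventually (\<lambda>n. 0 \<le> g n) sequentially" using nn by simp
  show "eventually (\<lambda>n. g n \<le> K * exp (- c * ln (real n))) sequentially"
    using eventually_ge_at_top[of "1::nat"] by eventually_elim (rule b)
qed

lemma up_decay:
  fixes f :: "nat \<Rightarrow> (nat \<Rightarrow> nat) \<Rightarrow> nat" and d :: real
  assumes d: "d > 0"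
    and gen: "\<And>n (x::real). (\<Sum>t\<in>{t. t permutes {1..n}}. x ^ f n t) = pochhammer x n"
  shows "(\<lambda>n. real (card {t. t permutes {1..n} \<and> (1 + d) * ln (real n) \<le> real (f n t)}) / fact n)
          \<longlonglongrightarrow> 0"
proof -
  define x where "x = 1 + d / 2"
  define c where "c = (1 + d) * ln x - d / 2"
  have x1: "x \<ge> 1" "x > 0" using d unfolding x_def by auto
  have lnx: "ln x \<ge> (d / 2) / x"
  proof -
    have "ln (1 / x) \<le> 1 / x - 1" using x1 by (intro ln_le_minus_one) auto
    then have "- ln x \<le> 1 / x - 1" using x1 by (simp add: ln_div)
    moreover have "1 / x - 1 = - ((d / 2) / x)" unfolding x_def using d by (simp add: field_simps)
    ultimately show ?thesis by simp
  qed
  have "(1 + d) * ln x \<ge> (1 + d) * ((d / 2) / x)"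
    using lnx d by (intro mult_left_mono) auto
  moreover have "(1 + d) * ((d / 2) / x) > d / 2"
    unfolding x_def using d by (simp add: field_simps)
  ultimately have c: "c > 0" unfolding c_def by simp
  show ?thesis
  proof (rule decay[OF c])
    fix n :: nat assume n1: "n \<ge> 1"
    let ?a = "(1 + d) * ln (real n)"
    have "real (card {t. t permutes {1..n} \<and> ?a \<le> real (f n t)}) / fact n
        \<le> exp ((x - 1) * harm n) / x powr ?a"
      by (rule tail_up[where f="f n", OF gen[of x n] x1(1)])
    also have "\<dots> = exp ((x - 1) * harm n - ?a * ln x)"
      using x1 by (simp add: powr_def exp_diff)
    also have "\<dots> \<le> exp ((x - 1) * (ln (real n) + 1) - ?a * ln x)"
      using harm_le_ln[OF n1] x1 by (intro exp_mono diff_right_mono mult_left_mono) auto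
    also have "(x - 1) * (ln (real n) + 1) - ?a * ln x = d / 2 + (- c * ln (real n))"
      unfolding c_def x_def by (simp add: algebra_simps)
    also have "exp (d / 2 + (- c * ln (real n))) = exp (d / 2) * exp (- c * ln (real n))"
      by (rule exp_add)
    finally show "real (card {t. t permutes {1..n} \<and> ?a \<le> real (f n t)}) / fact n
        \<le> exp (d / 2) * exp (- c * ln (real n))" .
  qed simp
qed

lemma low_decay:
  fixes f :: "nat \<Rightarrow> (nat \<Rightarrow> nat) \<Rightarrow> nat" and d :: real
  assumes d: "d > 0" "d < 1"
    and gen: "\<And>n (x::real). (\<Sum>t\<in>{t. t permutes {1..n}}. x ^ f n t) = pochhammer x n"
  shows "(\<lambda>n. real (card {t. t permutes {1..n} \<and> real (f n t) \<le> (1 - d) * ln (real n)}) / fact n)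
          \<longlonglongrightarrow> 0"
proof -
  define x where "x = 1 - d / 2"
  define c where "c = d / 2 + (1 - d) * ln x"
  have x1: "x \<le> 1" "x > 0" using d unfolding x_def by auto
  have lnx: "ln x \<ge> - (d / 2) / x"
  proof -
    have "ln (1 / x) \<le> 1 / x - 1" using x1 by (intro ln_le_minus_one) auto
    then have "- ln x \<le> 1 / x - 1" using x1 by (simp add: ln_div)
    moreover have "1 / x - 1 = (d / 2) / x" unfolding x_def using d by (simp add: field_simps)
    ultimately show ?thesis by simp
  qed
  have "(1 - d) * ln x \<ge> (1 - d) * (- (d / 2) / x)"
    using lnx d by (intro mult_left_mono) auto
  moreover have "d / 2 + (1 - d) * (- (d / 2) / x) > 0"
    unfolding x_def using d by (simp add: field_simps)
  ultimately have c: "c > 0" unfolding c_def by simp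
  show ?thesis
  proof (rule decay[OF c])
    fix n :: nat assume n1: "n \<ge> 1"
    let ?a = "(1 - d) * ln (real n)"
    have "real (card {t. t permutes {1..n} \<and> real (f n t) \<le> ?a}) / fact n
        \<le> exp ((x - 1) * harm n) / x powr ?a"
      by (rule tail_low[where f="f n", OF gen[of x n] x1(2) x1(1)])
    also have "\<dots> = exp ((x - 1) * harm n - ?a * ln x)"
      using x1 by (simp add: powr_def exp_diff)
    also have "\<dots> \<le> exp ((x - 1) * ln (real n) - ?a * ln x)"
    proof -
      have "(1 - x) * ln (real n) \<le> (1 - x) * harm n"
        using ln_le_harm'[OF n1] x1 by (intro mult_left_mono) auto
      then have "(x - 1) * harm n \<le> (x - 1) * ln (real n)" by (simp add: algebra_simps)
      then show ?thesis by simp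
    qed
    also have "(x - 1) * ln (real n) - ?a * ln x = - c * ln (real n)"
      unfolding c_def x_def by (simp add: algebra_simps)
    finally show "real (card {t. t permutes {1..n} \<and> real (f n t) \<le> ?a}) / fact n
        \<le> 1 * exp (- c * ln (real n))" by simp
  qed simp
qed

theorem corollary2:
  fixes \<epsilon> :: real
  assumes "\<epsilon> > 0"
  shows "(\<lambda>n. perm_prob n (\<lambda>tau.
            (2 - \<epsilon>) * ln (real n) \<le> real (greedy_steps tau n) \<and>
            real (greedy_steps tau n) \<le> (2 + \<epsilon>) * ln (real n)))
         \<longlonglongrightarrow> 1"
proof -
  define d where "d = min (\<epsilon> / 4) (1 / 2)"
  have d: "d > 0" "d < 1" "2 * d \<le> \<epsilon> / 2" using assms unfolding d_def by auto
  define Lf where "Lf = (\<lambda>n t. card (lrec t n))"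
  define Rf where "Rf = (\<lambda>n t. card (rrec t n))"
  have genL: "\<And>n (x::real). (\<Sum>t\<in>{t. t permutes {1..n}}. x ^ Lf n t) = pochhammer x n"
    unfolding Lf_def by (rule gen_lrec)
  have genR: "\<And>n (x::real). (\<Sum>t\<in>{t. t permutes {1..n}}. x ^ Rf n t) = pochhammer x n"
    unfolding Rf_def by (rule gen_rrec)
  define B1 where "B1 = (\<lambda>n. {t. t permutes {1..n} \<and> real (Lf n t) \<le> (1 - d) * ln (real n)})"
  define B2 where "B2 = (\<lambda>n. {t. t permutes {1..n} \<and> (1 + d) * ln (real n) \<le> real (Lf n t)})"
  define B3 where "B3 = (\<lambda>n. {t. t permutes {1..n} \<and> real (Rf n t) \<le> (1 - d) * ln (real n)})"
  define B4 where "B4 = (\<lambda>n. {t. t permutes {1..n} \<and> (1 + d) * ln (real n) \<le> real (Rf n t)})"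
  define p where "p = (\<lambda>n. (real (card (B1 n)) + real (card (B2 n)) + real (card (B3 n)) + real (card (B4 n)))
                          / fact n)"
  have p0: "p \<longlonglongrightarrow> 0"
  proof -
    have "(\<lambda>n. real (card (B1 n)) / fact n + real (card (B2 n)) / fact n
              + real (card (B3 n)) / fact n + real (card (B4 n)) / fact n) \<longlonglongrightarrow> 0 + 0 + 0 + 0"
      unfolding B1_def B2_def B3_def B4_def
      by (intro tendsto_add low_decay[OF d(1,2) genL] up_decay[OF d(1) genL]
            low_decay[OF d(1,2) genR] up_decay[OF d(1) genR])
    then show ?thesis unfolding p_def by (simp add: add_divide_distrib)
  qed
  let ?G = "\<lambda>n. {tau. tau permutes {1..n} \<and>
            ((2 - \<epsilon>) * ln (real n) \<le> real (greedy_steps tau n) \<and>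
            real (greedy_steps tau n) \<le> (2 + \<epsilon>) * ln (real n))}"
  have cardP: "card {tau. tau permutes {1..n}} = fact n" for n :: nat
    by (simp add: card_permutations)
  have finP: "finite {tau. tau permutes {1..n}}" for n :: nat
    by (intro finite_permutations) auto
  have pp: "perm_prob n (\<lambda>tau.
            (2 - \<epsilon>) * ln (real n) \<le> real (greedy_steps tau n) \<and>
            real (greedy_steps tau n) \<le> (2 + \<epsilon>) * ln (real n)) = real (card (?G n)) / fact n" for n
    unfolding perm_prob_def cardP by simp
  have upper: "real (card (?G n)) / fact n \<le> 1" for n
  proof -
    have "card (?G n) \<le> card {tau. tau permutes {1..n}}" using finP[of n] by (intro card_mono) auto
    then have "real (card (?G n)) \<le> real (fact n)" unfolding cardP by (simp only: of_nat_le_iff)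
    then have "real (card (?G n)) \<le> fact n" by (simp only: of_nat_fact)
    then show ?thesis by (simp add: divide_le_eq_1)
  qed
  have "filterlim (\<lambda>n. ln (real n)) at_top sequentially"
    by (rule filterlim_compose[OF ln_at_top filterlim_real_sequentially])
  then have evln: "eventually (\<lambda>n. 2 / (\<epsilon> - 2 * d) \<le> ln (real n)) sequentially"
    by (simp add: filterlim_at_top)
  have lower: "eventually (\<lambda>n. 1 - p n \<le> real (card (?G n)) / fact n) sequentially"
    using evln eventually_ge_at_top[of "1::nat"]
  proof eventually_elim
    case (elim n)
    let ?l = "ln (real n)"
    have l0: "?l \<ge> 0" using elim(2) by simp
    have ed: "\<epsilon> - 2 * d > 0" using d by simp
    have "2 \<le> (\<epsilon> - 2 * d) * ?l" using elim(1) ed by (simp add: divide_le_eq mult.commute)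
    then have key1: "(2 - \<epsilon>) * ?l \<le> (1 - d) * ?l + (1 - d) * ?l - 2" by (simp add: algebra_simps)
    have key2: "(1 + d) * ?l + (1 + d) * ?l \<le> (2 + \<epsilon>) * ?l"
    proof -
      have "(2 * d) * ?l \<le> \<epsilon> * ?l" using d l0 assms by (intro mult_right_mono) auto
      then show ?thesis by (simp add: algebra_simps)
    qed
    have sub: "{tau. tau permutes {1..n}} \<subseteq> ?G n \<union> B1 n \<union> B2 n \<union> B3 n \<union> B4 n"
    proof
      fix t assume t: "t \<in> {tau. tau permutes {1..n}}"
      show "t \<in> ?G n \<union> B1 n \<union> B2 n \<union> B3 n \<union> B4 n"
      proof (rule ccontr)
        assume nt: "t \<notin> ?G n \<union> B1 n \<union> B2 n \<union> B3 n \<union> B4 n"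
        have tp: "t permutes {1..n}" using t by simp
        have n1: "t \<notin> B1 n" "t \<notin> B2 n" "t \<notin> B3 n" "t \<notin> B4 n" using nt by blast+
        have h: "(1 - d) * ?l < real (Lf n t)" "real (Lf n t) < (1 + d) * ?l"
                "(1 - d) * ?l < real (Rf n t)" "real (Rf n t) < (1 + d) * ?l"
          using n1 tp unfolding B1_def B2_def B3_def B4_def by (simp_all add: not_le)
        have s: "real (greedy_steps t n) = real (Lf n t) + real (Rf n t) - 2"
          unfolding Lf_def Rf_def by (rule steps_eq[OF tp elim(2)])
        have "(2 - \<epsilon>) * ?l \<le> real (greedy_steps t n)" using s h key1 by linarith
        moreover have "real (greedy_steps t n) \<le> (2 + \<epsilon>) * ?l" using s h key2 by linarith
        ultimately have "t \<in> ?G n" using tp by simp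
        then show False using nt by simp
      qed
    qed
    have "card {tau. tau permutes {1..n}} \<le> card (?G n \<union> B1 n \<union> B2 n \<union> B3 n \<union> B4 n)"
      using sub finP[of n] unfolding B1_def B2_def B3_def B4_def
      by (intro card_mono) auto
    moreover have u: "card (A \<union> B) \<le> card A + card B" for A B :: "(nat \<Rightarrow> nat) set"
      by (rule card_Un_le)
    ultimately have "card {tau. tau permutes {1..n}} \<le> card (?G n) + card (B1 n) + card (B2 n) + card (B3 n) + card (B4 n)"
      using u[of "?G n \<union> B1 n \<union> B2 n \<union> B3 n" "B4 n"] u[of "?G n \<union> B1 n \<union> B2 n" "B3 n"]
        u[of "?G n \<union> B1 n" "B2 n"] u[of "?G n" "B1 n"] by linarith
    then have "real (card {tau. tau permutes {1..n}}) \<le> real (card (?G n) + card (B1 n) + card (B2 n) + card (B3 n) + card (B4 n))"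
      by (simp only: of_nat_le_iff)
    then have F: "fact n \<le> real (card (?G n)) + (real (card (B1 n)) + real (card (B2 n))
        + real (card (B3 n)) + real (card (B4 n)))"
      unfolding cardP of_nat_add of_nat_fact by simp
    have fp: "(fact n :: real) > 0" by simp
    have "1 - p n = (fact n - (real (card (B1 n)) + real (card (B2 n))
        + real (card (B3 n)) + real (card (B4 n)))) / fact n"
      unfolding p_def using fp by (simp add: diff_divide_distrib)
    also have "\<dots> \<le> real (card (?G n)) / fact n"
      using F fp by (intro divide_right_mono) auto
    finally show ?case .
  qed
  have "(\<lambda>n. real (card (?G n)) / fact n) \<longlonglongrightarrow> 1"
  proof (rule tendsto_sandwich[OF lower _ _ tendsto_const])
    show "eventually (\<lambda>n. real (card (?G n)) / fact n \<le> 1) sequentially" using upper by simp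
    show "(\<lambda>n. 1 - p n) \<longlonglongrightarrow> 1" using tendsto_diff[OF tendsto_const p0, of 1] by simp
  qed
  then show ?thesis unfolding pp .
qed

end
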